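(* Let $P$ and $Q$ be irreducible transition matrices on the finite set $S$, both reversible with respect to $\pi$, with eigenvalues (counting multiplicity) $1=\lambda_1\ge\lambda_2\ge\dots\ge\lambda_n$ for $P$ and $1=\beta_1\ge\beta_2\ge\dots\ge\beta_n$ for $Q$. Suppose $\max_{i\ge2}\lambda_i\le\min_{i\ge2}\beta_i$, i.e. $\lambda_2\le\beta_n$. Then $P$ efficiency-dominates $Q$.
   Context: $S$ is a finite set with $|S|=n$, and $\pi$ is a probability distribution on $S$ with $\pi(x)>0$ for all $x$. A transition matrix $P$ is reversible with respect to $\pi$ if $\pi(x)P(x,y)=\pi(y)P(y,x)$ for all $x,y$ (its eigenvalues are then real); irreducible if every state can be reached from every other with positive probability in some number of steps. For a Markov chain $X_1,X_2,\dots$ with transition matrix $P$ and $X_1\sim\pi$, $v(f,P)=\lim_{N\to\infty}\frac1N\mathrm{Var}\big(\sum_{i=1}^N f(X_i)\big)$. $P$ efficiency-dominates $Q$ if $v(f,P)\le v(f,Q)$ for all $f:S\to\mathbb R$. *)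

theory Defs
  imports "HOL-Analysis.Analysis" "HOL-Computational_Algebra.Polynomial"
begin

text \<open>The finite state space S is a finite type 's; n = CARD('s).
  A matrix on S is a function 's => 's => real.\<close>

definition prob_dist :: "('s::finite \<Rightarrow> real) \<Rightarrow> bool" where
  "prob_dist \<pi> \<longleftrightarrow> (\<forall>x. \<pi> x > 0) \<and> (\<Sum>x\<in>UNIV. \<pi> x) = 1"

definition transition_matrix :: "('s::finite \<Rightarrow> 's \<Rightarrow> real) \<Rightarrow> bool" where
  "transition_matrix P \<longleftrightarrow> (\<forall>x y. P x y \<ge> 0) \<and> (\<forall>x. (\<Sum>y\<in>UNIV. P x y) = 1)"

definition reversible :: "('s::finite \<Rightarrow> real) \<Rightarrow> ('s \<Rightarrow> 's \<Rightarrow> real) \<Rightarrow> bool" where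
  "reversible \<pi> P \<longleftrightarrow> (\<forall>x y. \<pi> x * P x y = \<pi> y * P y x)"

fun mpow :: "('s::finite \<Rightarrow> 's \<Rightarrow> real) \<Rightarrow> nat \<Rightarrow> 's \<Rightarrow> 's \<Rightarrow> real" where
  "mpow P 0 = (\<lambda>x y. if x = y then 1 else 0)"
| "mpow P (Suc k) = (\<lambda>x y. \<Sum>z\<in>UNIV. mpow P k x z * P z y)"

definition irreducible_chain :: "('s::finite \<Rightarrow> 's \<Rightarrow> real) \<Rightarrow> bool" where
  "irreducible_chain P \<longleftrightarrow> (\<forall>x y. \<exists>k. mpow P k x y > 0)"

text \<open>Characteristic polynomial det(X I - P) and eigenvalues counted with multiplicity,
  listed in non-increasing order: eigs P ! 0 \<ge> eigs P ! 1 \<ge> ... (so lambda_i = eigs P ! (i-1)).\<close>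
definition charpoly :: "('s::finite \<Rightarrow> 's \<Rightarrow> real) \<Rightarrow> real poly" where
  "charpoly P = det (\<chi> i j. (if i = j then [:0, 1:] else 0) - [:P i j:])"

definition eigs :: "('s::finite \<Rightarrow> 's \<Rightarrow> real) \<Rightarrow> real list" where
  "eigs P = rev (sorted_list_of_multiset (proots (charpoly P)))"

text \<open>Finite-dimensional law of the chain X_1,...,X_N with X_1 ~ pi:
  P(X_1 = x_1, ..., X_N = x_N) = pi(x_1) * prod P(x_i, x_{i+1}).\<close>
definition path_prob :: "('s \<Rightarrow> real) \<Rightarrow> ('s \<Rightarrow> 's \<Rightarrow> real) \<Rightarrow> 's list \<Rightarrow> real" where
  "path_prob \<pi> P xs = (case xs of [] \<Rightarrow> 1
      | x # _ \<Rightarrow> \<pi> x * prod_list (map (\<lambda>(a, b). P a b) (zip xs (tl xs))))"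

definition path_sum :: "('s \<Rightarrow> real) \<Rightarrow> 's list \<Rightarrow> real" where
  "path_sum f xs = sum_list (map f xs)"

definition sum_mean :: "('s::finite \<Rightarrow> real) \<Rightarrow> ('s \<Rightarrow> 's \<Rightarrow> real) \<Rightarrow> ('s \<Rightarrow> real) \<Rightarrow> nat \<Rightarrow> real" where
  "sum_mean \<pi> P f N = (\<Sum>xs\<in>{xs. length xs = N}. path_prob \<pi> P xs * path_sum f xs)"

definition sum_var :: "('s::finite \<Rightarrow> real) \<Rightarrow> ('s \<Rightarrow> 's \<Rightarrow> real) \<Rightarrow> ('s \<Rightarrow> real) \<Rightarrow> nat \<Rightarrow> real" where
  "sum_var \<pi> P f N = (\<Sum>xs\<in>{xs. length xs = N}.
       path_prob \<pi> P xs * (path_sum f xs - sum_mean \<pi> P f N)\<^sup>2)"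

definition asym_var :: "('s::finite \<Rightarrow> real) \<Rightarrow> ('s \<Rightarrow> real) \<Rightarrow> ('s \<Rightarrow> 's \<Rightarrow> real) \<Rightarrow> real" where
  "asym_var \<pi> f P = lim (\<lambda>N. sum_var \<pi> P f N / real N)"

definition efficiency_dominates :: "('s::finite \<Rightarrow> real) \<Rightarrow> ('s \<Rightarrow> 's \<Rightarrow> real) \<Rightarrow> ('s \<Rightarrow> 's \<Rightarrow> real) \<Rightarrow> bool" where
  "efficiency_dominates \<pi> P Q \<longleftrightarrow> (\<forall>f. asym_var \<pi> f P \<le> asym_var \<pi> f Q)"

end

theory Submission
  imports Defs
begin
lemma sym_inner:
  fixes M :: "real^'n^'n"
  assumes "transpose M = M"
  shows "(M *v y) \<bullet> x = y \<bullet> (M *v x)"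
  by (metis assms dot_lmul_matrix vector_transpose_matrix)

lemma quad_zero:
  fixes a c :: real
  assumes "\<And>t. 2*t*a + t^2*c \<le> 0"
  shows "a = 0"
proof -
  define d where "d = \<bar>c\<bar> + 1"
  have pos: "d > 0" "2*d + c > 0" unfolding d_def by (auto split: abs_split)
  define t where "t = a / d"
  have "2*t*a + t^2*c \<le> 0" by (rule assms)
  hence "(2*t*a + t^2*c) * d^2 \<le> 0"
    by (simp add: mult_nonpos_nonneg)
  moreover have "(2*t*a + t^2*c) * d^2 = a^2 * (2*d + c)"
    unfolding t_def using pos by (simp add: field_simps power2_eq_square)
  ultimately have "a^2 * (2*d + c) \<le> 0" by simp
  with pos have "a^2 \<le> 0"
    by (simp add: mult_le_0_iff)
  thus ?thesis by simp
qed

lemma spectral_aux: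
  fixes M :: "real^'n^'n"
  assumes sym: "transpose M = M"
  shows "subspace W \<Longrightarrow> (\<forall>x\<in>W. M *v x \<in> W) \<Longrightarrow>
    \<exists>B. finite B \<and> B \<subseteq> W \<and> pairwise orthogonal B \<and>
      (\<forall>b\<in>B. norm b = 1 \<and> M *v b = ((M *v b) \<bullet> b) *\<^sub>R b) \<and> W \<subseteq> span B"
proof (induction "dim W" arbitrary: W rule: less_induct)
  case less
  show ?case
  proof (cases "W \<subseteq> {0}")
    case True
    then show ?thesis by (intro exI[of _ "{}"]) auto
  next
    case False
    then obtain w where w: "w \<in> W" "w \<noteq> 0" by auto
    define K where "K = W \<inter> sphere 0 1"
    have cK: "compact K" unfolding K_def
      by (intro closed_Int_compact closed_subspace less.prems compact_sphere)
    have neK: "K \<noteq> {}"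
    proof -
      have "w /\<^sub>R norm w \<in> K" unfolding K_def
        using w less.prems(1) by (auto simp: subspace_scale)
      thus ?thesis by auto
    qed
    have ctK: "continuous_on K (\<lambda>x. (M *v x) \<bullet> x)"
      by (rule continuous_on_inner[OF linear_continuous_on[OF matrix_vector_mul_bounded_linear] continuous_on_id])
    obtain x where xK: "x \<in> K" and xmax: "\<And>y. y \<in> K \<Longrightarrow> (M *v y) \<bullet> y \<le> (M *v x) \<bullet> x"
      using continuous_attains_sup[OF cK neK ctK] by blast
    define \<mu> where "\<mu> = (M *v x) \<bullet> x"
    have xW: "x \<in> W" and nx: "norm x = 1" using xK by (auto simp: K_def)
    have xx: "x \<bullet> x = 1" using nx by (simp add: norm_eq_1)
    have mux: "x \<bullet> (M *v x) = \<mu>" by (simp add: \<mu>_def inner_commute)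
    have gen: "(M *v z) \<bullet> z \<le> \<mu> * (z \<bullet> z)" if "z \<in> W" for z
    proof (cases "z = 0")
      case True then show ?thesis by simp
    next
      case False
      have "z /\<^sub>R norm z \<in> K" unfolding K_def using that less.prems(1) False
        by (auto simp: subspace_scale)
      hence "(M *v (z /\<^sub>R norm z)) \<bullet> (z /\<^sub>R norm z) \<le> \<mu>" unfolding \<mu>_def by (rule xmax)
      hence "((M *v z) \<bullet> z) / (norm z)^2 \<le> \<mu>"
        by (simp add: matrix_vector_mult_scaleR power2_eq_square divide_inverse mult_ac)
      moreover have "(norm z)^2 = z \<bullet> z" by (simp add: power2_norm_eq_inner)
      moreover have "norm z > 0" using False by simp
      ultimately show ?thesis by (simp add: divide_le_eq)
    qed
    have orth: "(M *v x) \<bullet> y = 0" if "y \<in> W" "y \<bullet> x = 0" for y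
    proof -
      have "2*t*((M *v x) \<bullet> y) + t^2*((M *v y) \<bullet> y - \<mu> * (y \<bullet> y)) \<le> 0" for t
      proof -
        have "x + t *\<^sub>R y \<in> W" using xW that less.prems(1)
          by (simp add: subspace_add subspace_scale)
        hence "(M *v (x + t *\<^sub>R y)) \<bullet> (x + t *\<^sub>R y) \<le> \<mu> * ((x + t *\<^sub>R y) \<bullet> (x + t *\<^sub>R y))"
          by (rule gen)
        moreover have "(M *v y) \<bullet> x = (M *v x) \<bullet> y"
          using sym_inner[OF sym, of y x] by (simp add: inner_commute)
        ultimately show ?thesis using xx that(2) mux
          by (simp add: matrix_vector_right_distrib matrix_vector_mult_scaleR inner_add_left
              inner_add_right inner_commute algebra_simps power2_eq_square)
      qed
      thus ?thesis by (rule quad_zero)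
    qed
    have eig: "M *v x = \<mu> *\<^sub>R x"
    proof -
      define r where "r = M *v x - \<mu> *\<^sub>R x"
      have rW: "r \<in> W" unfolding r_def using less.prems xW
        by (simp add: subspace_diff subspace_scale)
      have "r \<bullet> x = 0" unfolding r_def using xx by (simp add: \<mu>_def inner_diff_left)
      hence "(M *v x) \<bullet> r = 0" using orth rW by blast
      moreover have "x \<bullet> r = 0" using \<open>r \<bullet> x = 0\<close> by (simp add: inner_commute)
      ultimately have "r \<bullet> r = 0" by (simp add: r_def inner_diff_left)
      thus ?thesis unfolding r_def by simp
    qed
    define W' where "W' = {y \<in> W. y \<bullet> x = 0}"
    have sW': "subspace W'" unfolding W'_def using less.prems(1)
      by (auto simp: subspace_def inner_add_left)
    have iW': "\<forall>y\<in>W'. M *v y \<in> W'"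
    proof
      fix y assume "y \<in> W'"
      hence "y \<in> W" "y \<bullet> x = 0" by (auto simp: W'_def)
      moreover have "(M *v y) \<bullet> x = y \<bullet> (M *v x)" by (rule sym_inner[OF sym])
      ultimately show "M *v y \<in> W'" using less.prems(2) eig by (simp add: W'_def)
    qed
    have "dim W' < dim W"
    proof -
      have "x \<notin> W'" using xx by (simp add: W'_def)
      moreover have "W' \<subseteq> W" by (auto simp: W'_def)
      ultimately have "W' \<subset> W" using xW by blast
      have "dim W' \<le> dim W" using \<open>W' \<subseteq> W\<close> by (rule dim_subset)
      moreover have "\<not> dim W \<le> dim W'"
        using subspace_dim_equal[OF sW' less.prems(1) \<open>W' \<subseteq> W\<close>] \<open>W' \<subset> W\<close> by blast
      ultimately show ?thesis by simp
    qed
    from less.hyps[OF this sW' iW'] obtain B' where B':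
      "finite B'" "B' \<subseteq> W'" "pairwise orthogonal B'"
      "\<forall>b\<in>B'. norm b = 1 \<and> M *v b = ((M *v b) \<bullet> b) *\<^sub>R b" "W' \<subseteq> span B'" by blast
    show ?thesis
    proof (intro exI[of _ "insert x B'"] conjI)
      show "finite (insert x B')" using B' by simp
      show "insert x B' \<subseteq> W" using B' xW by (auto simp: W'_def)
      show "pairwise orthogonal (insert x B')"
        using B'(2,3) unfolding pairwise_insert
        by (auto simp: W'_def orthogonal_def inner_commute)
      show "\<forall>b\<in>insert x B'. norm b = 1 \<and> M *v b = ((M *v b) \<bullet> b) *\<^sub>R b"
        using B'(4) nx eig \<mu>_def by auto
      show "W \<subseteq> span (insert x B')"
      proof
        fix v assume vW: "v \<in> W"
        define v' where "v' = v - (v \<bullet> x) *\<^sub>R x"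
        have "v' \<in> W'" unfolding W'_def v'_def using vW xW xx less.prems(1)
          by (simp add: subspace_diff subspace_scale inner_diff_left)
        hence "v' \<in> span (insert x B')" using B'(5) by (meson span_mono subset_insertI subsetD)
        moreover have "x \<in> span (insert x B')" by (simp add: span_base)
        ultimately have "v' + (v \<bullet> x) *\<^sub>R x \<in> span (insert x B')"
          by (simp add: span_add span_scale)
        thus "v \<in> span (insert x B')" by (simp add: v'_def)
      qed
    qed
  qed
qed

lemma det_zero_ker:
  fixes A :: "real^'n^'n"
  assumes "det A = 0"
  shows "\<exists>x. x \<noteq> 0 \<and> A *v x = 0"
proof -
  have "\<not> invertible A" using assms invertible_det_nz by blast
  hence "\<not> (\<exists>B. B ** A = mat 1)" using invertible_left_inverse by blast
  thus ?thesis using matrix_left_invertible_ker by blast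
qed

lemma poly_charpoly:
  "poly (charpoly P) t = det (\<chi> i j. (if i = j then t else 0) - P i j)"
  unfolding charpoly_def det_def
  by (auto simp: poly_sum poly_prod intro!: sum.cong prod.cong)

lemma eig_root:
  fixes P :: "'s::finite \<Rightarrow> 's \<Rightarrow> real"
  assumes "\<exists>y. v y \<noteq> 0" "\<And>x. (\<Sum>y\<in>UNIV. P x y * v y) = \<mu> * v x"
  shows "poly (charpoly P) \<mu> = 0"
proof (rule ccontr)
  let ?A = "(\<chi> i j. (if i = j then \<mu> else 0) - P i j) :: real^'s^'s"
  let ?w = "(\<chi> x. v x) :: real^'s"
  assume "poly (charpoly P) \<mu> \<noteq> 0"
  hence "det ?A \<noteq> 0" by (simp add: poly_charpoly)
  hence "invertible ?A" using invertible_det_nz by blast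
  then obtain B where "B ** ?A = mat 1" using invertible_left_inverse by blast
  hence ker: "\<forall>x. ?A *v x = 0 \<longrightarrow> x = 0" using matrix_left_invertible_ker by blast
  have "?A *v ?w = 0"
  proof (rule vec_eq_iff[THEN iffD2], rule allI)
    fix i
    have "(?A *v ?w) $ i = (\<Sum>j\<in>UNIV. ((if i = j then \<mu> else 0) - P i j) * v j)"
      by (simp add: matrix_vector_mult_def)
    also have "\<dots> = (\<Sum>j\<in>UNIV. (if i = j then \<mu> * v j else 0) - P i j * v j)"
      by (intro sum.cong) (auto simp: algebra_simps)
    also have "\<dots> = (\<Sum>j\<in>UNIV. (if i = j then \<mu> * v j else 0)) - (\<Sum>j\<in>UNIV. P i j * v j)"
      by (rule sum_subtractf)
    also have "\<dots> = 0" using assms(2)[of i] by simp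
    finally show "(?A *v ?w) $ i = 0 $ i" by simp
  qed
  hence "?w = 0" using ker by blast
  hence "\<forall>y. v y = 0" by (simp add: vec_eq_iff)
  thus False using assms(1) by simp
qed

lemma eig_bound:
  fixes P :: "'s::finite \<Rightarrow> 's \<Rightarrow> real"
  assumes tm: "transition_matrix P" and "\<exists>y. v y \<noteq> 0" and ev: "\<And>x. (\<Sum>y\<in>UNIV. P x y * v y) = \<mu> * v x"
  shows "\<bar>\<mu>\<bar> \<le> 1"
proof -
  obtain x where xm: "\<And>y. \<bar>v y\<bar> \<le> \<bar>v x\<bar>"
  proof -
    have "finite ((\<lambda>y. \<bar>v y\<bar>) ` UNIV)" by simp
    have "Max ((\<lambda>y. \<bar>v y\<bar>) ` UNIV) \<in> (\<lambda>y. \<bar>v y\<bar>) ` UNIV" by (intro Max_in) auto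
    then obtain x where "\<bar>v x\<bar> = Max ((\<lambda>y. \<bar>v y\<bar>) ` UNIV)" by (metis (no_types, lifting) imageE)
    moreover have "\<bar>v y\<bar> \<le> Max ((\<lambda>y. \<bar>v y\<bar>) ` UNIV)" for y by (intro Max_ge) auto
    ultimately show ?thesis using that by metis
  qed
  have pos: "\<bar>v x\<bar> > 0"
  proof (rule ccontr)
    assume "\<not> \<bar>v x\<bar> > 0"
    hence "\<And>y. v y = 0" using xm by (metis abs_le_zero_iff not_less order_trans abs_ge_zero antisym)
    thus False using assms(2) by blast
  qed
  have P0: "\<And>a b. P a b \<ge> 0" and P1: "\<And>a. (\<Sum>b\<in>UNIV. P a b) = 1" using tm by (auto simp: transition_matrix_def)
  have "\<bar>\<mu>\<bar> * \<bar>v x\<bar> = \<bar>\<Sum>y\<in>UNIV. P x y * v y\<bar>" using ev[of x] by (simp add: abs_mult)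
  also have "\<dots> \<le> (\<Sum>y\<in>UNIV. \<bar>P x y * v y\<bar>)" by (rule sum_abs)
  also have "\<dots> \<le> (\<Sum>y\<in>UNIV. P x y * \<bar>v x\<bar>)"
    by (intro sum_mono) (simp add: abs_mult P0 mult_left_mono xm)
  also have "\<dots> = \<bar>v x\<bar>" by (simp add: sum_distrib_right[symmetric] P1)
  finally show ?thesis using pos by simp
qed

lemma charpoly_nz:
  fixes P :: "'s::finite \<Rightarrow> 's \<Rightarrow> real"
  assumes tm: "transition_matrix P"
  shows "charpoly P \<noteq> 0"
proof
  assume "charpoly P = 0"
  hence "det (\<chi> i j. (if i = j then 2 else 0) - P i j) = 0"
    using poly_charpoly[of P 2] by simp
  then obtain w :: "real^'s" where w: "w \<noteq> 0" "(\<chi> i j. (if i = j then 2 else 0) - P i j) *v w = 0"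
    using det_zero_ker by blast
  have ev: "(\<Sum>y\<in>UNIV. P x y * w $ y) = 2 * w $ x" for x
  proof -
    have "0 = ((\<chi> i j. (if i = j then 2 else 0) - P i j) *v w) $ x" using w(2) by simp
    also have "\<dots> = (\<Sum>j\<in>UNIV. ((if x = j then 2 else 0) - P x j) * w $ j)"
      by (simp add: matrix_vector_mult_def)
    also have "\<dots> = (\<Sum>j\<in>UNIV. (if x = j then 2 * w $ j else 0) - P x j * w $ j)"
      by (intro sum.cong) (auto simp: algebra_simps)
    also have "\<dots> = (\<Sum>j\<in>UNIV. (if x = j then 2 * w $ j else 0)) - (\<Sum>j\<in>UNIV. P x j * w $ j)"
      by (rule sum_subtractf)
    finally show ?thesis by simp
  qed
  have "\<exists>y. (\<lambda>y. w $ y) y \<noteq> 0" using w(1) by (simp add: vec_eq_iff)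
  from eig_bound[OF tm this] ev have "\<bar>2::real\<bar> \<le> 1" by blast
  thus False by simp
qed

lemma degree_charpoly:
  fixes P :: "'s::finite \<Rightarrow> 's \<Rightarrow> real"
  shows "degree (charpoly P) \<le> CARD('s)"
  unfolding charpoly_def det_def
proof (rule degree_sum_le)
  fix p
  let ?M = "(\<chi> i j. (if i = j then [:0, 1:] else 0) - [:P i j:]) :: real poly^'s^'s"
  have "degree (\<Prod>i\<in>UNIV. ?M $ i $ p i) \<le> (\<Sum>i\<in>UNIV. (degree \<circ> (\<lambda>i. ?M $ i $ p i)) i)"
    by (rule degree_prod_sum_le) simp
  also have "\<dots> \<le> (\<Sum>i\<in>(UNIV::'s set). 1)"
  proof (rule sum_mono)
    fix i
    have "degree ((if i = p i then [:0, 1:] else 0) - [:P i (p i):]) \<le> 1"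
      by (rule order_trans[OF degree_diff_le_max]) auto
    thus "(degree \<circ> (\<lambda>i. ?M $ i $ p i)) i \<le> 1" by simp
  qed
  finally have "degree (\<Prod>i\<in>UNIV. ?M $ i $ p i) \<le> CARD('s)" by simp
  moreover have "degree (of_int (sign p) * (\<Prod>i\<in>UNIV. ?M $ i $ p i)) \<le> degree (of_int (sign p) :: real poly) + degree (\<Prod>i\<in>UNIV. ?M $ i $ p i)"
    by (rule degree_mult_le)
  ultimately show "degree (of_int (sign p) * (\<Prod>i\<in>UNIV. ?M $ i $ p i)) \<le> CARD('s)"
    by simp
qed simp

lemma eigs_length:
  fixes P :: "'s::finite \<Rightarrow> 's \<Rightarrow> real"
  shows "length (eigs P) \<le> CARD('s)"
proof -
  have "length (eigs P) = size (proots (charpoly P))"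
    unfolding eigs_def by (metis length_rev size_mset mset_sorted_list_of_multiset)
  also have "\<dots> \<le> degree (charpoly P)" by (rule size_proots_le)
  also have "\<dots> \<le> CARD('s)" by (rule degree_charpoly)
  finally show ?thesis .
qed

lemma eigs_sorted:
  assumes "i \<le> j" "j < length (eigs P)"
  shows "eigs P ! j \<le> eigs P ! i"
proof -
  let ?l = "sorted_list_of_multiset (proots (charpoly P))"
  have "eigs P ! j = ?l ! (length ?l - Suc j)" "eigs P ! i = ?l ! (length ?l - Suc i)"
    using assms unfolding eigs_def by (auto simp: rev_nth)
  moreover have "?l ! (length ?l - Suc j) \<le> ?l ! (length ?l - Suc i)"
    using assms unfolding eigs_def by (intro sorted_nth_mono) auto
  ultimately show ?thesis by simp
qed

lemma eigs_set:
  fixes P :: "'s::finite \<Rightarrow> 's \<Rightarrow> real"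
  assumes "transition_matrix P"
  shows "set (eigs P) = {x. poly (charpoly P) x = 0}"
  unfolding eigs_def using charpoly_nz[OF assms] by simp

lemma eigs_index:
  fixes P :: "'s::finite \<Rightarrow> 's \<Rightarrow> real"
  assumes tm: "transition_matrix P" and "\<exists>y. v y \<noteq> 0" and ev: "\<And>x. (\<Sum>y\<in>UNIV. P x y * v y) = \<mu> * v x"
    and "\<mu> < 1"
  shows "\<exists>i. 1 \<le> i \<and> i < length (eigs P) \<and> eigs P ! i = \<mu>"
proof -
  have "poly (charpoly P) \<mu> = 0" by (rule eig_root[OF assms(2) ev])
  hence "\<mu> \<in> set (eigs P)" using eigs_set[OF tm] by simp
  then obtain i where i: "i < length (eigs P)" "eigs P ! i = \<mu>" by (auto simp: in_set_conv_nth)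
  have "\<exists>y. (\<lambda>_::'s. 1::real) y \<noteq> 0" by simp
  moreover have "(\<Sum>y\<in>UNIV. P x y * 1) = 1 * 1" for x using tm by (simp add: transition_matrix_def)
  ultimately have "poly (charpoly P) 1 = 0" by (intro eig_root) auto
  hence "1 \<in> set (eigs P)" using eigs_set[OF tm] by simp
  then obtain k where k: "k < length (eigs P)" "eigs P ! k = 1" by (auto simp: in_set_conv_nth)
  have "i \<noteq> 0"
  proof
    assume "i = 0"
    hence "eigs P ! k \<le> eigs P ! i" using eigs_sorted[of 0 k P] k by simp
    thus False using k i assms(4) by simp
  qed
  hence "1 \<le> i" by simp
  thus ?thesis using i by blast
qed

definition Pop :: "('s::finite \<Rightarrow> 's \<Rightarrow> real) \<Rightarrow> ('s \<Rightarrow> real) \<Rightarrow> 's \<Rightarrow> real" where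
  "Pop P g = (\<lambda>x. \<Sum>y\<in>UNIV. P x y * g y)"

definition Wt :: "('s \<Rightarrow> 's \<Rightarrow> real) \<Rightarrow> 's \<Rightarrow> 's list \<Rightarrow> real" where
  "Wt P x xs = prod_list (map (\<lambda>(a, b). P a b) (zip (x # xs) xs))"

lemma Wt_Nil [simp]: "Wt P x [] = 1" by (simp add: Wt_def)
lemma Wt_Cons [simp]: "Wt P x (y # xs) = P x y * Wt P y xs" by (simp add: Wt_def)
lemma path_prob_Cons: "path_prob \<pi> P (x # xs) = \<pi> x * Wt P x xs"
  by (simp add: path_prob_def Wt_def)
lemma path_sum_Cons [simp]: "path_sum f (x # xs) = f x + path_sum f xs"
  by (simp add: path_sum_def)
lemma path_sum_Nil [simp]: "path_sum f [] = 0"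
  by (simp add: path_sum_def)

lemma finite_lists: "finite {xs :: ('s::finite) list. length xs = n}"
  using finite_lists_length_eq[of "UNIV :: 's set" n] by simp

lemma lists_0: "{xs :: 's list. length xs = 0} = {[]}" by auto

lemma sum_lists_Suc:
  "(\<Sum>xs\<in>{xs :: ('s::finite) list. length xs = Suc n}. F xs) =
   (\<Sum>y\<in>UNIV. \<Sum>xs\<in>{xs. length xs = n}. F (y # xs))"
proof -
  have eq: "{xs :: 's list. length xs = Suc n} = (\<lambda>(xs, y). y # xs) ` ({xs. length xs = n} \<times> UNIV)"
    using lists_length_Suc_eq[of "UNIV :: 's set" n] by simp
  have inj: "inj_on (\<lambda>(xs, y). y # xs) ({xs :: 's list. length xs = n} \<times> UNIV)"
    by (auto simp: inj_on_def)
  have "(\<Sum>xs\<in>{xs :: 's list. length xs = Suc n}. F xs) = (\<Sum>(xs, y)\<in>{xs. length xs = n} \<times> UNIV. F (y # xs))"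
    unfolding eq by (subst sum.reindex[OF inj]) (simp add: case_prod_unfold)
  also have "\<dots> = (\<Sum>xs\<in>{xs. length xs = n}. \<Sum>y\<in>UNIV. F (y # xs))"
    by (rule sum.cartesian_product[symmetric])
  also have "\<dots> = (\<Sum>y\<in>UNIV. \<Sum>xs\<in>{xs. length xs = n}. F (y # xs))"
    by (rule sum.swap)
  finally show ?thesis .
qed

lemma sum_lin2:
  fixes c a :: real
  shows "(\<Sum>i\<in>I. c * (a * u i + v i)) = c * (a * sum u I + sum v I)"
proof -
  have "(\<Sum>i\<in>I. c * (a * u i + v i)) = (\<Sum>i\<in>I. (c * a) * u i + c * v i)"
    by (intro sum.cong refl) (simp add: algebra_simps)
  also have "\<dots> = (c * a) * sum u I + c * sum v I" by (simp add: sum.distrib sum_distrib_left)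
  also have "\<dots> = c * (a * sum u I + sum v I)" by (simp add: algebra_simps)
  finally show ?thesis .
qed

lemma sum_lin3:
  fixes c a b :: real
  shows "(\<Sum>i\<in>I. c * (a * u i + b * v i + w i)) = c * (a * sum u I + b * sum v I + sum w I)"
proof -
  have "(\<Sum>i\<in>I. c * (a * u i + b * v i + w i)) = (\<Sum>i\<in>I. (c * a) * u i + (c * b) * v i + c * w i)"
    by (intro sum.cong refl) (simp add: algebra_simps)
  also have "\<dots> = (c * a) * sum u I + (c * b) * sum v I + c * sum w I" by (simp add: sum.distrib sum_distrib_left)
  also have "\<dots> = c * (a * sum u I + b * sum v I + sum w I)" by (simp add: algebra_simps)
  finally show ?thesis .
qed

definition Zs :: "('s::finite \<Rightarrow> 's \<Rightarrow> real) \<Rightarrow> nat \<Rightarrow> 's \<Rightarrow> real" where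
  "Zs P n x = (\<Sum>xs\<in>{xs. length xs = n}. Wt P x xs)"
definition As :: "('s::finite \<Rightarrow> 's \<Rightarrow> real) \<Rightarrow> ('s \<Rightarrow> real) \<Rightarrow> nat \<Rightarrow> 's \<Rightarrow> real" where
  "As P f n x = (\<Sum>xs\<in>{xs. length xs = n}. Wt P x xs * path_sum f (x # xs))"
definition Bs :: "('s::finite \<Rightarrow> 's \<Rightarrow> real) \<Rightarrow> ('s \<Rightarrow> real) \<Rightarrow> nat \<Rightarrow> 's \<Rightarrow> real" where
  "Bs P f n x = (\<Sum>xs\<in>{xs. length xs = n}. Wt P x xs * (path_sum f (x # xs))\<^sup>2)"

lemma Zs_1:
  assumes tm: "transition_matrix P"
  shows "Zs P n x = 1"
proof (induction n arbitrary: x)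
  case 0 then show ?case by (simp add: Zs_def lists_0)
next
  case (Suc n)
  have "Zs P (Suc n) x = (\<Sum>y\<in>UNIV. P x y * Zs P n y)"
    unfolding Zs_def sum_lists_Suc by (simp add: sum_distrib_left)
  also have "\<dots> = 1" using Suc tm by (simp add: transition_matrix_def)
  finally show ?case .
qed

lemma As_0: "As P f 0 x = f x" by (simp add: As_def lists_0)
lemma Bs_0: "Bs P f 0 x = (f x)\<^sup>2" by (simp add: Bs_def lists_0)

lemma As_Suc:
  assumes tm: "transition_matrix P"
  shows "As P f (Suc n) x = f x + Pop P (As P f n) x"
proof -
  have "As P f (Suc n) x = (\<Sum>y\<in>UNIV. \<Sum>xs\<in>{xs. length xs = n}. P x y * (f x * Wt P y xs + Wt P y xs * path_sum f (y # xs)))"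
    unfolding As_def sum_lists_Suc by (intro sum.cong refl) (simp add: algebra_simps)
  also have "\<dots> = (\<Sum>y\<in>UNIV. P x y * (f x * Zs P n y + As P f n y))"
    unfolding sum_lin2 Zs_def As_def ..
  also have "\<dots> = f x * (\<Sum>y\<in>UNIV. P x y) + Pop P (As P f n) x"
    using Zs_1[OF tm] by (simp add: Pop_def algebra_simps sum.distrib sum_distrib_left)
  also have "\<dots> = f x + Pop P (As P f n) x" using tm by (simp add: transition_matrix_def)
  finally show ?thesis .
qed

lemma Bs_Suc:
  assumes tm: "transition_matrix P"
  shows "Bs P f (Suc n) x = (f x)\<^sup>2 + 2 * f x * Pop P (As P f n) x + Pop P (Bs P f n) x"
proof -
  have "Bs P f (Suc n) x = (\<Sum>y\<in>UNIV. \<Sum>xs\<in>{xs. length xs = n}. P x y * ((f x)\<^sup>2 * Wt P y xs + 2 * f x * (Wt P y xs * path_sum f (y # xs)) + Wt P y xs * (path_sum f (y # xs))\<^sup>2))"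
    unfolding Bs_def sum_lists_Suc by (intro sum.cong refl) (simp add: algebra_simps power2_eq_square)
  also have "\<dots> = (\<Sum>y\<in>UNIV. P x y * ((f x)\<^sup>2 * Zs P n y + 2 * f x * As P f n y + Bs P f n y))"
    unfolding sum_lin3 Zs_def As_def Bs_def ..
  also have "\<dots> = (f x)\<^sup>2 * (\<Sum>y\<in>UNIV. P x y) + 2 * f x * Pop P (As P f n) x + Pop P (Bs P f n) x"
    using Zs_1[OF tm] by (simp add: Pop_def algebra_simps sum.distrib sum_distrib_left sum_distrib_right)
  also have "\<dots> = (f x)\<^sup>2 + 2 * f x * Pop P (As P f n) x + Pop P (Bs P f n) x"
    using tm by (simp add: transition_matrix_def)
  finally show ?thesis .
qed

lemma sum_pp:
  assumes "prob_dist \<pi>" "transition_matrix P"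
  shows "(\<Sum>xs\<in>{xs. length xs = N}. path_prob \<pi> P xs) = 1"
proof (cases N)
  case 0 then show ?thesis by (simp add: lists_0 path_prob_def)
next
  case (Suc n)
  have "(\<Sum>xs\<in>{xs. length xs = N}. path_prob \<pi> P xs) = (\<Sum>x\<in>UNIV. \<pi> x * Zs P n x)"
    unfolding Suc sum_lists_Suc by (simp add: path_prob_Cons Zs_def sum_distrib_left)
  also have "\<dots> = 1" using assms by (simp add: Zs_1 prob_dist_def)
  finally show ?thesis .
qed

lemma sum_mean_Suc:
  "sum_mean \<pi> P f (Suc n) = (\<Sum>x\<in>UNIV. \<pi> x * As P f n x)"
  unfolding sum_mean_def sum_lists_Suc
  by (simp add: path_prob_Cons As_def sum_distrib_left mult.assoc)

lemma sum_sq_Suc: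
  "(\<Sum>xs\<in>{xs. length xs = Suc n}. path_prob \<pi> P xs * (path_sum f xs)\<^sup>2) = (\<Sum>x\<in>UNIV. \<pi> x * Bs P f n x)"
  unfolding sum_lists_Suc
  by (simp add: path_prob_Cons Bs_def sum_distrib_left mult.assoc)

lemma path_sum_shift:
  "path_sum (\<lambda>x. f x - c) xs = path_sum f xs - c * real (length xs)"
  by (induction xs) (auto simp: algebra_simps)

lemma sum_var_shift:
  assumes "prob_dist \<pi>" "transition_matrix P"
  shows "sum_var \<pi> P (\<lambda>x. f x - c) N = sum_var \<pi> P f N"
proof -
  have m: "sum_mean \<pi> P (\<lambda>x. f x - c) N = sum_mean \<pi> P f N - c * real N"
  proof -
    have "sum_mean \<pi> P (\<lambda>x. f x - c) N = (\<Sum>xs\<in>{xs. length xs = N}. path_prob \<pi> P xs * path_sum f xs - c * real N * path_prob \<pi> P xs)"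
      unfolding sum_mean_def by (intro sum.cong) (auto simp: path_sum_shift algebra_simps)
    also have "\<dots> = sum_mean \<pi> P f N - c * real N * (\<Sum>xs\<in>{xs. length xs = N}. path_prob \<pi> P xs)"
      by (simp add: sum_mean_def sum_subtractf sum_distrib_left)
    finally show ?thesis using sum_pp[OF assms] by simp
  qed
  show ?thesis unfolding sum_var_def m
    by (intro sum.cong) (auto simp: path_sum_shift algebra_simps)
qed

lemma stationary:
  assumes "transition_matrix P" "reversible \<pi> P"
  shows "(\<Sum>x\<in>UNIV. \<pi> x * Pop P g x) = (\<Sum>x\<in>UNIV. \<pi> x * g x)"
proof -
  have "(\<Sum>x\<in>UNIV. \<pi> x * Pop P g x) = (\<Sum>x\<in>UNIV. \<Sum>y\<in>UNIV. \<pi> x * P x y * g y)"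
    by (simp add: Pop_def sum_distrib_left mult.assoc)
  also have "\<dots> = (\<Sum>y\<in>UNIV. \<Sum>x\<in>UNIV. \<pi> y * P y x * g y)"
    using assms(2) by (subst sum.swap) (simp add: reversible_def)
  also have "\<dots> = (\<Sum>y\<in>UNIV. \<pi> y * g y * (\<Sum>x\<in>UNIV. P y x))"
    by (simp add: sum_distrib_left algebra_simps)
  also have "\<dots> = (\<Sum>x\<in>UNIV. \<pi> x * g x)" using assms(1) by (simp add: transition_matrix_def)
  finally show ?thesis .
qed

lemma Pop_sum: "Pop P (\<lambda>x. \<Sum>k\<in>K. g k x) = (\<lambda>x. \<Sum>k\<in>K. Pop P (g k) x)"
  by (auto simp: Pop_def sum_distrib_left intro: sum.swap)

lemma Pop_add: "Pop P (\<lambda>x. a x + b x) = (\<lambda>x. Pop P a x + Pop P b x)"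
  by (auto simp: Pop_def algebra_simps sum.distrib)

lemma Pop_scale: "Pop P (\<lambda>x. c * a x) = (\<lambda>x. c * Pop P a x)"
  by (auto simp: Pop_def algebra_simps sum_distrib_left)

lemma Pop_As:
  assumes tm: "transition_matrix P"
  shows "Pop P (As P h n) = (\<lambda>x. \<Sum>k\<le>n. (Pop P ^^ Suc k) h x)"
proof (induction n)
  case 0 then show ?case by (simp add: As_0[abs_def])
next
  case (Suc n)
  have "As P h (Suc n) = (\<lambda>x. h x + Pop P (As P h n) x)" using As_Suc[OF tm] by auto
  hence "Pop P (As P h (Suc n)) = (\<lambda>x. Pop P h x + Pop P (\<lambda>x. \<Sum>k\<le>n. (Pop P ^^ Suc k) h x) x)"
    using Suc by (simp add: Pop_add)
  also have "\<dots> = (\<lambda>x. \<Sum>k\<le>Suc n. (Pop P ^^ Suc k) h x)"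
    by (simp add: Pop_sum sum.atMost_Suc_shift del: sum.atMost_Suc)
  finally show ?case .
qed

definition ee :: "nat \<Rightarrow> real \<Rightarrow> real" where
  "ee n \<mu> = real (Suc n) * (1 + \<mu>) / (1 - \<mu>) - 2 * \<mu> * (1 - \<mu> ^ Suc n) / (1 - \<mu>)\<^sup>2"

lemma ee_0:
  assumes "\<mu> \<noteq> 1"
  shows "ee 0 \<mu> = 1"
proof -
  have ne: "1 - \<mu> \<noteq> 0" using assms by simp
  have "2 * \<mu> * (1 - \<mu>) / (1 - \<mu>)\<^sup>2 = 2 * \<mu> / (1 - \<mu>)"
    using ne by (simp add: power2_eq_square)
  hence "ee 0 \<mu> = (1 + \<mu>) / (1 - \<mu>) - 2 * \<mu> / (1 - \<mu>)" by (simp add: ee_def)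
  also have "\<dots> = (1 - \<mu>) / (1 - \<mu>)" by (simp add: diff_divide_distrib[symmetric])
  also have "\<dots> = 1" using ne by simp
  finally show ?thesis .
qed

lemma ee_Suc:
  assumes "\<mu> \<noteq> 1"
  shows "ee (Suc n) \<mu> = 1 + 2 * (\<Sum>k\<le>n. \<mu> ^ Suc k) + ee n \<mu>"
proof -
  have geo: "(\<Sum>k\<le>n. \<mu> ^ Suc k) = \<mu> * (1 - \<mu> ^ Suc n) / (1 - \<mu>)"
  proof -
    have "(\<Sum>k\<le>n. \<mu> ^ Suc k) = \<mu> * (\<Sum>k<Suc n. \<mu> ^ k)"
      by (simp add: sum_distrib_left lessThan_Suc_atMost)
    also have "\<dots> = \<mu> * (1 - \<mu> ^ Suc n) / (1 - \<mu>)"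
      using assms by (subst sum_gp_strict) simp
    finally show ?thesis .
  qed
  define d where "d = 1 - \<mu>"
  have ne: "d \<noteq> 0" using assms by (simp add: d_def)
  have mu: "\<mu> = 1 - d" by (simp add: d_def)
  define X where "X = \<mu> ^ n"
  have "ee (Suc n) \<mu> = (real n + 2) * (1 + \<mu>) / d - 2 * \<mu> * (1 - \<mu> * \<mu> * X) / d\<^sup>2"
    by (simp add: ee_def d_def X_def algebra_simps)
  moreover have "ee n \<mu> = (real n + 1) * (1 + \<mu>) / d - 2 * \<mu> * (1 - \<mu> * X) / d\<^sup>2"
    by (simp add: ee_def d_def X_def algebra_simps)
  moreover have "\<mu> * (1 - \<mu> ^ Suc n) / (1 - \<mu>) = \<mu> * (1 - \<mu> * X) / d"
    by (simp add: d_def X_def)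
  moreover have "(real n + 2) * (1 + \<mu>) / d - 2 * \<mu> * (1 - \<mu> * \<mu> * X) / d\<^sup>2 =
     1 + 2 * (\<mu> * (1 - \<mu> * X) / d) + ((real n + 1) * (1 + \<mu>) / d - 2 * \<mu> * (1 - \<mu> * X) / d\<^sup>2)"
    using ne unfolding mu by (simp add: field_simps power2_eq_square)
  ultimately show ?thesis unfolding geo by simp
qed

lemma mpow_nonneg:
  assumes "transition_matrix P"
  shows "mpow P k x y \<ge> 0"
  using assms
  by (induction k arbitrary: y) (auto simp: transition_matrix_def intro!: sum_nonneg)

lemma harmonic_const:
  fixes P :: "'s::finite \<Rightarrow> 's \<Rightarrow> real"
  assumes tm: "transition_matrix P" and irr: "irreducible_chain P"
    and harm: "\<And>x. (\<Sum>y\<in>UNIV. P x y * \<phi> y) = \<phi> x"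
  shows "\<exists>c. \<forall>y. \<phi> y = c"
proof -
  have P0: "\<And>a b. P a b \<ge> 0" and P1: "\<And>a. (\<Sum>b\<in>UNIV. P a b) = 1"
    using tm by (auto simp: transition_matrix_def)
  obtain x0 where xm: "\<And>y. \<phi> y \<le> \<phi> x0"
  proof -
    have "Max (range \<phi>) \<in> range \<phi>" by (intro Max_in) auto
    then obtain x where "\<phi> x = Max (range \<phi>)" by (metis (no_types, lifting) imageE)
    moreover have "\<phi> y \<le> Max (range \<phi>)" for y by (intro Max_ge) auto
    ultimately show ?thesis using that by metis
  qed
  have step: "\<phi> y = \<phi> x0" if "\<phi> z = \<phi> x0" "P z y > 0" for z y
  proof -
    have "(\<Sum>w\<in>UNIV. P z w * (\<phi> z - \<phi> w)) = \<phi> z * (\<Sum>w\<in>UNIV. P z w) - (\<Sum>w\<in>UNIV. P z w * \<phi> w)"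
      by (simp add: algebra_simps sum_subtractf sum_distrib_left)
    also have "\<dots> = 0" using P1 harm by simp
    finally have "(\<Sum>w\<in>UNIV. P z w * (\<phi> z - \<phi> w)) = 0" .
    moreover have "\<And>w. P z w * (\<phi> z - \<phi> w) \<ge> 0" using P0 xm that(1) by (simp add: mult_nonneg_nonneg)
    ultimately have "P z y * (\<phi> z - \<phi> y) = 0" by (simp add: sum_nonneg_eq_0_iff)
    thus ?thesis using that by simp
  qed
  have reach: "mpow P k x0 y > 0 \<Longrightarrow> \<phi> y = \<phi> x0" for k y
  proof (induction k arbitrary: y)
    case 0 then show ?case by (simp split: if_splits)
  next
    case (Suc k)
    have "\<exists>z. mpow P k x0 z * P z y > 0"
    proof (rule ccontr)
      assume "\<not> ?thesis"
      hence "(\<Sum>z\<in>UNIV. mpow P k x0 z * P z y) \<le> 0" by (intro sum_nonpos) (simp add: not_less)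
      thus False using Suc.prems by simp
    qed
    then obtain z where z: "mpow P k x0 z * P z y > 0" by blast
    have "mpow P k x0 z > 0" "P z y > 0"
      using z mpow_nonneg[OF tm, of k x0 z] P0[of z y] by (auto simp: zero_less_mult_iff)
    thus ?case using Suc.IH step by blast
  qed
  show ?thesis
  proof (intro exI allI)
    fix y
    obtain k where "mpow P k x0 y > 0" using irr by (auto simp: irreducible_chain_def)
    thus "\<phi> y = \<phi> x0" by (rule reach)
  qed
qed

lemma g_mono:
  fixes x y :: real
  assumes "x \<le> y" "y < 1"
  shows "(1 + x) / (1 - x) \<le> (1 + y) / (1 - y)"
proof -
  have "(1 + x) * (1 - y) \<le> (1 + y) * (1 - x)" using assms by (simp add: algebra_simps)
  thus ?thesis using assms by (simp add: divide_simps)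
qed

lemma ee_lim:
  assumes "\<bar>\<mu>\<bar> \<le> 1" "\<mu> \<noteq> 1"
  shows "(\<lambda>n. ee n \<mu> / real (Suc n)) \<longlonglongrightarrow> (1 + \<mu>) / (1 - \<mu>)"
proof -
  define K where "K = \<bar>2 * \<mu> / (1 - \<mu>)\<^sup>2\<bar> * 2"
  have eq: "ee n \<mu> / real (Suc n) = (1 + \<mu>) / (1 - \<mu>) - (2 * \<mu> / (1 - \<mu>)\<^sup>2) * ((1 - \<mu> ^ Suc n) / real (Suc n))" for n
  proof -
    have e: "ee n \<mu> = real (Suc n) * ((1 + \<mu>) / (1 - \<mu>)) - (2 * \<mu> / (1 - \<mu>)\<^sup>2) * (1 - \<mu> ^ Suc n)"
      unfolding ee_def by simp
    have gen: "\<And>N a b c :: real. N \<noteq> 0 \<Longrightarrow> (N * a - b * c) / N = a - b * (c / N)"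
      by (simp add: field_simps)
    show ?thesis unfolding e by (rule gen) simp
  qed
  have "(\<lambda>n. (2 * \<mu> / (1 - \<mu>)\<^sup>2) * ((1 - \<mu> ^ Suc n) / real (Suc n))) \<longlonglongrightarrow> 0"
  proof (rule Lim_null_comparison)
    show "\<forall>\<^sub>F n in sequentially. norm ((2 * \<mu> / (1 - \<mu>)\<^sup>2) * ((1 - \<mu> ^ Suc n) / real (Suc n))) \<le> K * inverse (real (Suc n))"
    proof (intro always_eventually allI)
      fix n
      have "\<bar>\<mu>\<bar> ^ Suc n \<le> 1" using assms(1) by (intro power_le_one) auto
      hence "\<bar>\<mu> ^ Suc n\<bar> \<le> 1" by (simp only: power_abs)
      hence b: "\<bar>1 - \<mu> ^ Suc n\<bar> \<le> 2" by linarith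
      have "norm ((2 * \<mu> / (1 - \<mu>)\<^sup>2) * ((1 - \<mu> ^ Suc n) / real (Suc n))) =
            \<bar>2 * \<mu> / (1 - \<mu>)\<^sup>2\<bar> * \<bar>1 - \<mu> ^ Suc n\<bar> * inverse (real (Suc n))"
        by (simp add: abs_mult divide_inverse)
      also have "\<dots> \<le> \<bar>2 * \<mu> / (1 - \<mu>)\<^sup>2\<bar> * 2 * inverse (real (Suc n))"
        using b by (intro mult_right_mono mult_left_mono) auto
      finally show "norm ((2 * \<mu> / (1 - \<mu>)\<^sup>2) * ((1 - \<mu> ^ Suc n) / real (Suc n))) \<le> K * inverse (real (Suc n))"
        by (simp add: K_def)
    qed
    show "(\<lambda>n. K * inverse (real (Suc n))) \<longlonglongrightarrow> 0"
      using tendsto_mult[OF tendsto_const LIMSEQ_inverse_real_of_nat, of K] by simp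
  qed
  hence "(\<lambda>n. (1 + \<mu>) / (1 - \<mu>) - (2 * \<mu> / (1 - \<mu>)\<^sup>2) * ((1 - \<mu> ^ Suc n) / real (Suc n))) \<longlonglongrightarrow> (1 + \<mu>) / (1 - \<mu>) - 0"
    by (intro tendsto_diff tendsto_const)
  thus ?thesis unfolding eq by simp
qed

lemma chain_decomp:
  fixes \<pi> :: "'s::finite \<Rightarrow> real" and P :: "'s \<Rightarrow> 's \<Rightarrow> real" and f :: "'s \<Rightarrow> real"
  assumes pd: "prob_dist \<pi>" and tm: "transition_matrix P" and irr: "irreducible_chain P"
    and rv: "reversible \<pi> P"
  defines "u \<equiv> (\<chi> x. sqrt (\<pi> x) * (f x - (\<Sum>y\<in>UNIV. \<pi> y * f y))) :: real^'s"
  shows "\<exists>B \<mu>. finite B \<and> (\<forall>b\<in>B. \<mu> b < 1 \<and> (\<exists>i. 1 \<le> i \<and> i < length (eigs P) \<and> eigs P ! i = \<mu> b))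
    \<and> (\<Sum>b\<in>B. (u \<bullet> b)\<^sup>2) = u \<bullet> u
    \<and> asym_var \<pi> f P = (\<Sum>b\<in>B. (u \<bullet> b)\<^sup>2 * ((1 + \<mu> b) / (1 - \<mu> b)))"
proof -
  define m where "m = (\<Sum>y\<in>UNIV. \<pi> y * f y)"
  define h where "h = (\<lambda>x. f x - m)"
  define s where "s = (\<lambda>x. sqrt (\<pi> x))"
  have ppos: "\<And>x. \<pi> x > 0" and psum: "(\<Sum>x\<in>UNIV. \<pi> x) = 1" using pd by (auto simp: prob_dist_def)
  have spos: "\<And>x. s x > 0" using ppos by (simp add: s_def)
  have snz: "\<And>x. s x \<noteq> 0" using spos by (metis less_irrefl)
  have ss: "\<And>x. s x * s x = \<pi> x" using ppos by (simp add: s_def less_imp_le)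
  have P1: "\<And>a. (\<Sum>b\<in>UNIV. P a b) = 1" using tm by (auto simp: transition_matrix_def)
  have u_comp: "\<And>x. u $ x = s x * h x" by (simp add: u_def s_def h_def m_def)
  define A :: "real^'s^'s" where "A = (\<chi> x y. s x * P x y / s y)"
  define sv :: "real^'s" where "sv = (\<chi> x. s x)"
  have symA: "transpose A = A"
  proof -
    have "s j * P j i / s i = s i * P i j / s j" for i j
    proof -
      have "\<pi> i * P i j = \<pi> j * P j i" using rv by (simp add: reversible_def)
      hence "s i * s i * P i j = s j * s j * P j i" by (simp add: ss)
      thus ?thesis using spos[of i] spos[of j] by (simp add: field_simps)
    qed
    thus ?thesis by (simp add: vec_eq_iff transpose_def A_def)
  qed
  have Av: "(A *v v) $ x = s x * (\<Sum>y\<in>UNIV. P x y * (v $ y / s y))" for v x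
    by (simp add: A_def matrix_vector_mult_def sum_distrib_left algebra_simps)
  have Asv: "A *v sv = sv"
  proof -
    have "(A *v sv) $ x = sv $ x" for x
      by (simp add: Av sv_def P1 snz)
    thus ?thesis by (simp add: vec_eq_iff)
  qed
  define W where "W = {v :: real^'s. v \<bullet> sv = 0}"
  have sW: "subspace W" unfolding W_def subspace_def by (simp add: inner_add_left)
  have iW: "\<forall>v\<in>W. A *v v \<in> W"
  proof
    fix v assume "v \<in> W"
    thus "A *v v \<in> W" using sym_inner[OF symA, of v sv] Asv by (simp add: W_def)
  qed
  obtain B where B: "finite B" "B \<subseteq> W" "pairwise orthogonal B"
    "\<forall>b\<in>B. norm b = 1 \<and> A *v b = ((A *v b) \<bullet> b) *\<^sub>R b" "W \<subseteq> span B"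
    using spectral_aux[OF symA sW iW] by blast
  define \<mu> where "\<mu> b = (A *v b) \<bullet> b" for b
  define \<phi> where "\<phi> b = (\<lambda>y. b $ y / s y)" for b
  have A\<phi>: "(\<Sum>y\<in>UNIV. P x y * \<phi> b y) = \<mu> b * \<phi> b x" if "b \<in> B" for b x
  proof -
    have "A *v b = \<mu> b *\<^sub>R b" using B(4) that unfolding \<mu>_def by blast
    hence "(A *v b) $ x = \<mu> b * b $ x" by simp
    hence "s x * (\<Sum>y\<in>UNIV. P x y * \<phi> b y) = \<mu> b * b $ x" by (simp add: Av \<phi>_def)
    thus ?thesis using spos[of x] by (simp add: \<phi>_def field_simps)
  qed
  have nz: "\<exists>y. \<phi> b y \<noteq> 0" if "b \<in> B" for b
  proof -
    have "b \<noteq> 0" using B(4) that by auto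
    then obtain y where "b $ y \<noteq> 0" by (auto simp: vec_eq_iff)
    thus ?thesis using spos[of y] by (auto simp: \<phi>_def)
  qed
  have bsv: "b \<bullet> sv = (\<Sum>y\<in>UNIV. b $ y * s y)" for b by (simp add: inner_vec_def sv_def)
  have mu_ne1: "\<mu> b \<noteq> 1" if "b \<in> B" for b
  proof
    assume "\<mu> b = 1"
    hence "\<And>x. (\<Sum>y\<in>UNIV. P x y * \<phi> b y) = \<phi> b x" using A\<phi>[OF that] by simp
    then obtain c where c: "\<forall>y. \<phi> b y = c" using harmonic_const[OF tm irr] by blast
    have bys: "b $ y = c * s y" for y
    proof -
      have "b $ y / s y = c" using c by (simp add: \<phi>_def)
      thus ?thesis using snz[of y] by (simp add: divide_eq_eq)
    qed
    have "b \<bullet> sv = 0" using B(2) that by (auto simp: W_def)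
    hence "(\<Sum>y\<in>UNIV. c * \<pi> y) = 0" by (simp add: bsv bys mult.assoc ss)
    hence "c = 0" by (simp add: sum_distrib_left[symmetric] psum)
    thus False using nz[OF that] c by simp
  qed
  have mu_bd: "\<bar>\<mu> b\<bar> \<le> 1" if "b \<in> B" for b
    using eig_bound[OF tm nz[OF that] A\<phi>[OF that]] .
  have mu_lt: "\<mu> b < 1" if "b \<in> B" for b using mu_bd[OF that] mu_ne1[OF that] by auto
  have mu_idx: "\<exists>i. 1 \<le> i \<and> i < length (eigs P) \<and> eigs P ! i = \<mu> b" if "b \<in> B" for b
    using eigs_index[OF tm nz[OF that] A\<phi>[OF that] mu_lt[OF that]] .
  have hmean: "(\<Sum>x\<in>UNIV. \<pi> x * h x) = 0"
    by (simp add: h_def m_def algebra_simps sum_subtractf sum_distrib_right[symmetric] psum)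
  have uW: "u \<in> W"
  proof -
    have "u \<bullet> sv = (\<Sum>x\<in>UNIV. \<pi> x * h x)"
      by (simp add: bsv u_comp ss[symmetric] algebra_simps)
    thus ?thesis using hmean by (simp add: W_def)
  qed
  define c where "c b = u \<bullet> b" for b
  have uexp: "(\<Sum>b\<in>B. (u \<bullet> b) *\<^sub>R b) = u"
    using orthonormal_basis_expand[OF B(3) _ _ B(1)] B(4,5) uW by blast
  have h_exp: "h x = (\<Sum>b\<in>B. c b * \<phi> b x)" for x
  proof -
    have "u $ x = (\<Sum>b\<in>B. c b * b $ x)" by (subst uexp[symmetric]) (simp add: c_def)
    hence "s x * h x = (\<Sum>b\<in>B. c b * b $ x)" by (simp add: u_comp)
    hence "h x = (\<Sum>b\<in>B. c b * b $ x) / s x" using spos[of x] by (simp add: field_simps)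
    thus ?thesis by (simp add: \<phi>_def sum_divide_distrib)
  qed
  have Pop_pow: "(Pop P ^^ k) h = (\<lambda>x. \<Sum>b\<in>B. c b * \<mu> b ^ k * \<phi> b x)" for k
  proof (induction k)
    case 0 then show ?case by (simp add: h_exp[abs_def])
  next
    case (Suc k)
    have "(Pop P ^^ Suc k) h = Pop P (\<lambda>x. \<Sum>b\<in>B. c b * \<mu> b ^ k * \<phi> b x)" using Suc by simp
    also have "\<dots> = (\<lambda>x. \<Sum>b\<in>B. Pop P (\<lambda>x. (c b * \<mu> b ^ k) * \<phi> b x) x)" by (rule Pop_sum)
    also have "\<dots> = (\<lambda>x. \<Sum>b\<in>B. c b * \<mu> b ^ Suc k * \<phi> b x)"
    proof (rule ext, rule sum.cong[OF refl])
      fix x b assume "b \<in> B"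
      thus "Pop P (\<lambda>x. (c b * \<mu> b ^ k) * \<phi> b x) x = c b * \<mu> b ^ Suc k * \<phi> b x"
        by (simp add: Pop_scale Pop_def A\<phi>)
    qed
    finally show ?case .
  qed
  have cb: "(\<Sum>x\<in>UNIV. \<pi> x * h x * \<phi> b x) = c b" for b
  proof -
    have "(\<Sum>x\<in>UNIV. \<pi> x * h x * \<phi> b x) = (\<Sum>x\<in>UNIV. u $ x * b $ x)"
      using spos by (intro sum.cong refl) (simp add: u_comp \<phi>_def ss[symmetric] field_simps)
    thus ?thesis by (simp add: c_def inner_vec_def)
  qed
  define G where "G k = (\<Sum>x\<in>UNIV. \<pi> x * h x * (Pop P ^^ k) h x)" for k
  have G_eq: "G k = (\<Sum>b\<in>B. (c b)\<^sup>2 * \<mu> b ^ k)" for k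
  proof -
    have "G k = (\<Sum>x\<in>UNIV. \<Sum>b\<in>B. c b * \<mu> b ^ k * (\<pi> x * h x * \<phi> b x))"
      unfolding G_def Pop_pow by (simp add: sum_distrib_left algebra_simps)
    also have "\<dots> = (\<Sum>b\<in>B. c b * \<mu> b ^ k * (\<Sum>x\<in>UNIV. \<pi> x * h x * \<phi> b x))"
      by (subst sum.swap) (simp add: sum_distrib_left)
    also have "\<dots> = (\<Sum>b\<in>B. c b * \<mu> b ^ k * c b)" by (simp only: cb)
    also have "\<dots> = (\<Sum>b\<in>B. (c b)\<^sup>2 * \<mu> b ^ k)" by (intro sum.cong refl) (simp add: power2_eq_square)
    finally show ?thesis .
  qed
  have pars: "(\<Sum>b\<in>B. (u \<bullet> b)\<^sup>2) = u \<bullet> u"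
  proof -
    have "u \<bullet> u = (\<Sum>x\<in>UNIV. \<pi> x * h x * h x)"
      by (simp add: inner_vec_def u_comp ss[symmetric] algebra_simps)
    also have "\<dots> = G 0" by (simp add: G_def)
    finally show ?thesis using G_eq[of 0] by (simp add: c_def)
  qed
  have EA: "(\<Sum>x\<in>UNIV. \<pi> x * As P h n x) = 0" for n
  proof (induction n)
    case 0 then show ?case by (simp add: As_0 hmean)
  next
    case (Suc n)
    have "(\<Sum>x\<in>UNIV. \<pi> x * As P h (Suc n) x) = (\<Sum>x\<in>UNIV. \<pi> x * h x) + (\<Sum>x\<in>UNIV. \<pi> x * Pop P (As P h n) x)"
      by (simp add: As_Suc[OF tm] algebra_simps sum.distrib)
    also have "\<dots> = 0" using Suc hmean stationary[OF tm rv] by simp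
    finally show ?case .
  qed
  have EB: "(\<Sum>x\<in>UNIV. \<pi> x * Bs P h n x) = (\<Sum>b\<in>B. (c b)\<^sup>2 * ee n (\<mu> b))" for n
  proof (induction n)
    case 0
    have "(\<Sum>x\<in>UNIV. \<pi> x * Bs P h 0 x) = G 0" by (simp add: Bs_0 G_def power2_eq_square algebra_simps)
    also have "\<dots> = (\<Sum>b\<in>B. (c b)\<^sup>2 * ee 0 (\<mu> b))"
      unfolding G_eq by (intro sum.cong refl) (simp add: ee_0 mu_ne1)
    finally show ?case .
  next
    case (Suc n)
    have pa: "(\<Sum>x\<in>UNIV. \<pi> x * h x * Pop P (As P h n) x) = (\<Sum>k\<le>n. G (Suc k))"
      unfolding G_def Pop_As[OF tm] by (simp add: sum_distrib_left) (rule sum.swap)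
    have "(\<Sum>x\<in>UNIV. \<pi> x * Bs P h (Suc n) x) =
      (\<Sum>x\<in>UNIV. \<pi> x * h x * h x) + 2 * (\<Sum>x\<in>UNIV. \<pi> x * h x * Pop P (As P h n) x) + (\<Sum>x\<in>UNIV. \<pi> x * Pop P (Bs P h n) x)"
      by (simp add: Bs_Suc[OF tm] algebra_simps sum.distrib sum_distrib_left power2_eq_square)
    also have "\<dots> = G 0 + 2 * (\<Sum>k\<le>n. G (Suc k)) + (\<Sum>b\<in>B. (c b)\<^sup>2 * ee n (\<mu> b))"
      unfolding pa stationary[OF tm rv] Suc by (simp add: G_def)
    also have "\<dots> = (\<Sum>b\<in>B. (c b)\<^sup>2 * (1 + 2 * (\<Sum>k\<le>n. \<mu> b ^ Suc k) + ee n (\<mu> b)))"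
      unfolding G_eq by (simp add: sum.distrib sum_distrib_left algebra_simps sum.swap[of _ B])
    also have "\<dots> = (\<Sum>b\<in>B. (c b)\<^sup>2 * ee (Suc n) (\<mu> b))"
      by (intro sum.cong refl) (simp add: ee_Suc mu_ne1)
    finally show ?case .
  qed
  have sv_eq: "sum_var \<pi> P f (Suc n) = (\<Sum>b\<in>B. (c b)\<^sup>2 * ee n (\<mu> b))" for n
  proof -
    have "sum_var \<pi> P f (Suc n) = sum_var \<pi> P h (Suc n)"
      unfolding h_def by (rule sum_var_shift[OF pd tm, symmetric])
    also have "\<dots> = (\<Sum>xs\<in>{xs. length xs = Suc n}. path_prob \<pi> P xs * (path_sum h xs)\<^sup>2)"
      unfolding sum_var_def sum_mean_Suc EA by simp
    also have "\<dots> = (\<Sum>x\<in>UNIV. \<pi> x * Bs P h n x)" by (rule sum_sq_Suc)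
    finally show ?thesis using EB by simp
  qed
  define L where "L = (\<Sum>b\<in>B. (u \<bullet> b)\<^sup>2 * ((1 + \<mu> b) / (1 - \<mu> b)))"
  have "(\<lambda>n. sum_var \<pi> P f (Suc n) / real (Suc n)) \<longlonglongrightarrow> L"
  proof -
    have "(\<lambda>n. \<Sum>b\<in>B. (c b)\<^sup>2 * (ee n (\<mu> b) / real (Suc n))) \<longlonglongrightarrow> L"
      unfolding L_def c_def
      by (intro tendsto_sum tendsto_mult tendsto_const ee_lim mu_bd mu_ne1)
    moreover have "sum_var \<pi> P f (Suc n) / real (Suc n) = (\<Sum>b\<in>B. (c b)\<^sup>2 * (ee n (\<mu> b) / real (Suc n)))" for n
      by (simp add: sv_eq sum_divide_distrib)
    ultimately show ?thesis by simp
  qed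
  hence "(\<lambda>N. sum_var \<pi> P f N / real N) \<longlonglongrightarrow> L" by (rule LIMSEQ_imp_Suc)
  hence "asym_var \<pi> f P = L" unfolding asym_var_def by (rule limI)
  thus ?thesis using B(1) mu_lt mu_idx pars unfolding L_def by blast
qed

lemma idx_le:
  fixes P Q :: "'s::finite \<Rightarrow> 's \<Rightarrow> real"
  assumes A8: "\<forall>i j. 1 \<le> i \<and> i < CARD('s) \<and> 1 \<le> j \<and> j < CARD('s) \<longrightarrow> eigs P ! i \<le> eigs Q ! j"
  and "1 \<le> j" "j < length (eigs Q)"
  shows "eigs P ! 1 \<le> eigs Q ! j"
proof -
  have "j < CARD('s)" using assms(3) eigs_length[of Q] by linarith
  hence c: "1 \<le> (1::nat) \<and> 1 < CARD('s) \<and> 1 \<le> j \<and> j < CARD('s)" using assms(2) by linarith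
  have "1 \<le> (1::nat) \<and> 1 < CARD('s) \<and> 1 \<le> j \<and> j < CARD('s) \<longrightarrow> eigs P ! 1 \<le> eigs Q ! j"
    using A8 by blast
  thus ?thesis using c by blast
qed

theorem theorem6:
  fixes \<pi> :: "'s::finite \<Rightarrow> real" and P Q :: "'s \<Rightarrow> 's \<Rightarrow> real"
  assumes "prob_dist \<pi>"
    and "transition_matrix P" and "transition_matrix Q"
    and "irreducible_chain P" and "irreducible_chain Q"
    and "reversible \<pi> P" and "reversible \<pi> Q"
    and "\<forall>i j. 1 \<le> i \<and> i < CARD('s) \<and> 1 \<le> j \<and> j < CARD('s) \<longrightarrow> eigs P ! i \<le> eigs Q ! j"
  shows "efficiency_dominates \<pi> P Q"
  unfolding efficiency_dominates_def
proof
  fix f :: "'s \<Rightarrow> real"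
  define u :: "real^'s" where "u = (\<chi> x. sqrt (\<pi> x) * (f x - (\<Sum>y\<in>UNIV. \<pi> y * f y)))"
  obtain BP \<mu> where BP: "finite BP" "\<forall>b\<in>BP. \<mu> b < 1 \<and> (\<exists>i. 1 \<le> i \<and> i < length (eigs P) \<and> eigs P ! i = \<mu> b)"
    "(\<Sum>b\<in>BP. (u \<bullet> b)\<^sup>2) = u \<bullet> u" "asym_var \<pi> f P = (\<Sum>b\<in>BP. (u \<bullet> b)\<^sup>2 * ((1 + \<mu> b) / (1 - \<mu> b)))"
    using chain_decomp[OF assms(1,2,4,6), of f] unfolding u_def by blast
  obtain BQ \<nu> where BQ: "finite BQ" "\<forall>b\<in>BQ. \<nu> b < 1 \<and> (\<exists>i. 1 \<le> i \<and> i < length (eigs Q) \<and> eigs Q ! i = \<nu> b)"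
    "(\<Sum>b\<in>BQ. (u \<bullet> b)\<^sup>2) = u \<bullet> u" "asym_var \<pi> f Q = (\<Sum>b\<in>BQ. (u \<bullet> b)\<^sup>2 * ((1 + \<nu> b) / (1 - \<nu> b)))"
    using chain_decomp[OF assms(1,3,5,7), of f] unfolding u_def by blast
  show "asym_var \<pi> f P \<le> asym_var \<pi> f Q"
  proof (cases "BQ = {}")
    case True
    have "u \<bullet> u = 0" using BQ(3) True by simp
    hence "u = 0" by (simp only: inner_eq_zero_iff)
    hence z: "\<And>b. u \<bullet> b = 0" by (simp only: inner_zero_left)
    have "asym_var \<pi> f P = 0" unfolding BP(4) z by simp
    moreover have "asym_var \<pi> f Q = 0" unfolding BQ(4) True by simp
    ultimately show ?thesis by simp
  next
    case False
    hence "\<exists>b. b \<in> BQ" by (simp add: ex_in_conv)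
    then obtain b0 where b0: "b0 \<in> BQ" ..
    define lam where "lam = eigs P ! 1"
    have nu_ge: "lam \<le> \<nu> b" if bQ: "b \<in> BQ" for b
    proof -
      obtain j where j: "1 \<le> j" "j < length (eigs Q)" "eigs Q ! j = \<nu> b" using BQ(2) bQ by blast
      have "eigs P ! 1 \<le> eigs Q ! j" by (rule idx_le[OF assms(8) j(1,2)])
      thus ?thesis using j(3) unfolding lam_def by simp
    qed
    have "\<nu> b0 < 1" using BQ(2) b0 by blast
    hence lam1: "lam < 1" using nu_ge[OF b0] by linarith
    have mu_le: "\<mu> b \<le> lam" if bP: "b \<in> BP" for b
    proof -
      obtain i where i: "1 \<le> i" "i < length (eigs P)" "eigs P ! i = \<mu> b" using BP(2) bP by blast
      show ?thesis using eigs_sorted[OF i(1,2)] i(3) unfolding lam_def by simp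
    qed
    define G where "G = (1 + lam) / (1 - lam)"
    have s1: "(u \<bullet> b)\<^sup>2 * ((1 + \<mu> b) / (1 - \<mu> b)) \<le> (u \<bullet> b)\<^sup>2 * G" if "b \<in> BP" for b
    proof (rule mult_left_mono)
      show "(1 + \<mu> b) / (1 - \<mu> b) \<le> G" unfolding G_def by (rule g_mono[OF mu_le[OF that] lam1])
    qed simp
    have s2: "(u \<bullet> b)\<^sup>2 * G \<le> (u \<bullet> b)\<^sup>2 * ((1 + \<nu> b) / (1 - \<nu> b))" if "b \<in> BQ" for b
    proof (rule mult_left_mono)
      have "\<nu> b < 1" using BQ(2) that by blast
      thus "G \<le> (1 + \<nu> b) / (1 - \<nu> b)" unfolding G_def by (rule g_mono[OF nu_ge[OF that]])
    qed simp
    have "asym_var \<pi> f P \<le> (\<Sum>b\<in>BP. (u \<bullet> b)\<^sup>2 * G)"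
      unfolding BP(4) by (rule sum_mono) (rule s1)
    also have "\<dots> = (\<Sum>b\<in>BP. (u \<bullet> b)\<^sup>2) * G" by (rule sum_distrib_right[symmetric])
    also have "\<dots> = (\<Sum>b\<in>BQ. (u \<bullet> b)\<^sup>2) * G" by (simp only: BP(3) BQ(3))
    also have "\<dots> = (\<Sum>b\<in>BQ. (u \<bullet> b)\<^sup>2 * G)" by (rule sum_distrib_right)
    also have "\<dots> \<le> asym_var \<pi> f Q"
      unfolding BQ(4) by (rule sum_mono) (rule s2)
    finally show ?thesis .
  qed
qed

end
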